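(* Let $p>2$ be a prime and $n$ a natural number with $n+1<p$. Let $(A,+,\circ)$ be a left brace of cardinality $p^{n}$ which is strongly nilpotent of nilpotency index $k<p$, and suppose the group $(A,\circ)$ is powerful. Let $\gamma$ be a primitive root modulo $p^{p}$, $\xi=\gamma^{p^{p-1}}$, and define $a\cdot b=\sum_{i=0}^{p-2}\xi^{p-1-i}\big((\xi^{i}a)*b\big)$ for $a,b\in A$. Then the pre-Lie ring $(A,+,\cdot)$ is powerful, i.e. $a\cdot b-b\cdot a\in pA$ for all $a,b\in A$.
   Context: A (left) brace is a set $A$ with operations $+,\circ$ such that $(A,+)$ is an abelian group, $(A,\circ)$ is a group, and $a\circ(b+c)+a=a\circ b+a\circ c$; $a*b=a\circ b-a-b$. $A$ is strongly nilpotent of index $k$ if $A^{[k]}=0\ne A^{[k-1]}$, where $A^{[1]}=A$ and $A^{[i]}$ is the additive span of $a*b$ with $a\in A^{[j]}$, $b\in A^{[i-j]}$, $0<j<i$. Under these hypotheses $(A,+,\cdot)$ is a pre-Lie ring. A finite $p$-group $G$ ($p>2$) is powerful if $G'\le G^{p}=\langle g^{p}\rangle$. *)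

theory Defs
  imports "HOL-Number_Theory.Residue_Primitive_Roots" "HOL-Algebra.Generated_Groups"
begin

text \<open>In a brace the neutral element of (A, circ) is necessarily the additive zero
  (put b = c = 0 in the brace identity), so we use 0 as the unit.\<close>
definition circ_group :: "('a::ab_group_add \<Rightarrow> 'a \<Rightarrow> 'a) \<Rightarrow> 'a monoid" where
  "circ_group circ = \<lparr>carrier = UNIV, monoid.mult = circ, one = 0\<rparr>"

definition left_brace :: "('a::ab_group_add \<Rightarrow> 'a \<Rightarrow> 'a) \<Rightarrow> bool" where
  "left_brace circ \<longleftrightarrow> group (circ_group circ) \<and>
     (\<forall>a b c. circ a (b + c) + a = circ a b + circ a c)"

definition bstar :: "('a::ab_group_add \<Rightarrow> 'a \<Rightarrow> 'a) \<Rightarrow> 'a \<Rightarrow> 'a \<Rightarrow> 'a" where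
  "bstar circ a b = circ a b - a - b"

inductive in_bpow :: "('a::ab_group_add \<Rightarrow> 'a \<Rightarrow> 'a) \<Rightarrow> nat \<Rightarrow> 'a \<Rightarrow> bool"
  for circ where
  one: "in_bpow circ (Suc 0) a"
| star: "0 < j \<Longrightarrow> j < i \<Longrightarrow> in_bpow circ j a \<Longrightarrow> in_bpow circ (i - j) b
          \<Longrightarrow> in_bpow circ i (bstar circ a b)"
| zero: "0 < i \<Longrightarrow> in_bpow circ i 0"
| add: "in_bpow circ i a \<Longrightarrow> in_bpow circ i b \<Longrightarrow> in_bpow circ i (a + b)"
| neg: "in_bpow circ i a \<Longrightarrow> in_bpow circ i (- a)"

definition bpow :: "('a::ab_group_add \<Rightarrow> 'a \<Rightarrow> 'a) \<Rightarrow> nat \<Rightarrow> 'a set" where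
  "bpow circ i = {a. in_bpow circ i a}"

definition strongly_nilpotent_index :: "('a::ab_group_add \<Rightarrow> 'a \<Rightarrow> 'a) \<Rightarrow> nat \<Rightarrow> bool" where
  "strongly_nilpotent_index circ k \<longleftrightarrow> bpow circ k = {0} \<and> bpow circ (k - 1) \<noteq> {0}"

definition nsmul :: "nat \<Rightarrow> 'a::ab_group_add \<Rightarrow> 'a" where
  "nsmul m a = (\<Sum>_<m. a)"

definition powerful_group :: "'a monoid \<Rightarrow> nat \<Rightarrow> bool" where
  "powerful_group G p \<longleftrightarrow>
     derived G (carrier G) \<subseteq> generate G {x [^]\<^bsub>G\<^esub> p | x. x \<in> carrier G}"

definition dot :: "('a::ab_group_add \<Rightarrow> 'a \<Rightarrow> 'a) \<Rightarrow> nat \<Rightarrow> nat \<Rightarrow> 'a \<Rightarrow> 'a \<Rightarrow> 'a" where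
  "dot circ p xi a b = (\<Sum>i = 0..p - 2. nsmul (xi ^ (p - 1 - i)) (bstar circ (nsmul (xi ^ i) a) b))"

end

theory Submission
  imports Defs
begin

lemma nsmul_0[simp]: "nsmul 0 a = 0" by (simp add: nsmul_def)
lemma nsmul_Suc: "nsmul (Suc m) a = a + nsmul m a" by (simp add: nsmul_def add.commute)
lemma nsmul_zero[simp]: "nsmul m (0::'a::ab_group_add) = 0" by (simp add: nsmul_def)
lemma nsmul_add: "nsmul m (a + b) = nsmul m a + nsmul m (b::'a::ab_group_add)"
  by (simp add: nsmul_def sum.distrib)
lemma nsmul_neg: "nsmul m (- a) = - nsmul m (a::'a::ab_group_add)"
  by (simp add: nsmul_def sum_negf)
lemma nsmul_diff: "nsmul m (a - b) = nsmul m a - nsmul m (b::'a::ab_group_add)"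
  by (simp add: nsmul_def sum_subtractf)
lemma nsmul_plus: "nsmul (m + n) a = nsmul m a + nsmul n (a::'a::ab_group_add)"
  by (induction m) (simp_all add: nsmul_Suc add.assoc)
lemma nsmul_mult: "nsmul (m * n) a = nsmul m (nsmul n (a::'a::ab_group_add))"
  by (induction m) (simp_all add: nsmul_Suc nsmul_plus)
lemma nsmul_sum: "nsmul m (sum g A) = (\<Sum>i\<in>A. nsmul m (g i :: 'a::ab_group_add))"
  unfolding nsmul_def by (rule sum.swap)
lemma nsmul_additive:
  assumes "\<And>x y. f (x + y) = f x + (f y :: 'b::ab_group_add)"
  shows "f (nsmul m (a::'a::ab_group_add)) = nsmul m (f a)"
proof -
  have f0: "f 0 = 0" using assms[of 0 0] by simp
  show ?thesis by (induction m) (simp_all add: nsmul_Suc assms f0)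
qed

lemma cg_simps[simp]:
  "monoid.mult (circ_group circ) = circ" "one (circ_group circ) = 0"
  "carrier (circ_group circ) = UNIV"
  by (simp_all add: circ_group_def)

definition inP :: "nat \<Rightarrow> 'a::ab_group_add \<Rightarrow> bool" where
  "inP p z \<longleftrightarrow> (\<exists>w. z = nsmul p w)"

lemma inP_add: "inP p a \<Longrightarrow> inP p b \<Longrightarrow> inP p (a + b)"
  unfolding inP_def by (metis nsmul_add)
lemma inP_diff: "inP p a \<Longrightarrow> inP p b \<Longrightarrow> inP p (a - b)"
  unfolding inP_def by (metis nsmul_diff)
lemma inP_nsmul: "inP p a \<Longrightarrow> inP p (nsmul m a)"
  unfolding inP_def by (metis mult.commute nsmul_mult)
lemma inP_sum: "(\<And>i. i \<in> A \<Longrightarrow> inP p (g i)) \<Longrightarrow> inP p (sum g A)"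
proof -
  assume h: "\<And>i. i \<in> A \<Longrightarrow> inP p (g i)"
  then obtain w where "\<And>i. i \<in> A \<Longrightarrow> g i = nsmul p (w i)" unfolding inP_def by metis
  then have "sum g A = nsmul p (sum w A)" by (simp add: nsmul_sum)
  then show ?thesis unfolding inP_def by blast
qed

lemma in_bpow_0: "in_bpow circ i a \<Longrightarrow> i > 0"
  by (induction rule: in_bpow.induct) auto

lemma Lpow_in: "in_bpow circ (Suc j) ((bstar circ x ^^ j) x)"
proof (induction j)
  case 0 then show ?case by (simp add: in_bpow.one)
next
  case (Suc j)
  have "in_bpow circ (Suc (Suc j)) (bstar circ x ((bstar circ x ^^ j) x))"
    using in_bpow.star[of 1 "Suc (Suc j)" circ x "((bstar circ x ^^ j) x)"] Suc in_bpow.one[of circ x]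
    by simp
  then show ?case by simp
qed

theorem proposition2p9:
  fixes circ :: "'a::{ab_group_add, finite} \<Rightarrow> 'a \<Rightarrow> 'a"
    and p n k \<gamma> :: nat
  assumes "prime p" and "p > 2" and "n + 1 < p"
    and "left_brace circ"
    and "card (UNIV :: 'a set) = p ^ n"
    and "strongly_nilpotent_index circ k" and "k < p"
    and "powerful_group (circ_group circ) p"
    and "residue_primroot (p ^ p) \<gamma>"
  shows "\<forall>a b. dot circ p (\<gamma> ^ (p ^ (p - 1))) a b - dot circ p (\<gamma> ^ (p ^ (p - 1))) b a
           \<in> {nsmul p x | x. True}"
proof -
  define G where "G = circ_group circ"
  have grp: "group G" using assms(4) unfolding left_brace_def G_def by blast
  interpret G: group G by (rule grp)
  have br: "\<And>a b c. circ a (b + c) + a = circ a b + circ a c"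
    using assms(4) unfolding left_brace_def by blast
  define L where "L = bstar circ"
  have circL: "\<And>x y. circ x y = x + y + L x y" unfolding L_def bstar_def by simp
  have Ladd: "\<And>x y z. L x (y + z) = L x y + L x z"
  proof -
    fix x y z
    have "circ x (y + z) = circ x y + circ x z - x" using br[of x y z] by (simp add: algebra_simps)
    then show "L x (y + z) = L x y + L x z" unfolding L_def bstar_def by (simp add: algebra_simps)
  qed
  define lam where "lam x y = circ x y - x" for x y
  have lamadd: "\<And>x y z. lam x (y + z) = lam x y + lam x z"
    unfolding lam_def using br by (simp add: algebra_simps)
  have assoc: "\<And>x y z. circ (circ x y) z = circ x (circ y z)"
    using G.m_assoc unfolding G_def by simp
  have lone: "\<And>x. circ 0 x = x" using G.l_one unfolding G_def by simp
  have rinv: "\<And>x. circ x (inv\<^bsub>G\<^esub> x) = 0" using G.r_inv unfolding G_def by simp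
  have linv: "\<And>x. circ (inv\<^bsub>G\<^esub> x) x = 0" using G.l_inv unfolding G_def by simp
  have lamcomp: "\<And>a b c. lam a (lam b c) = lam (circ a b) c"
  proof -
    fix a b c
    have "lam a (lam b c) + lam a b = lam a (circ b c)"
      using lamadd[of a "lam b c" b] unfolding lam_def by simp
    then show "lam a (lam b c) = lam (circ a b) c" unfolding lam_def by (simp add: assoc algebra_simps)
  qed
  have k1: "k \<ge> 1"
  proof (rule ccontr)
    assume "\<not> k \<ge> 1" then have "k = 0" by simp
    then have "bpow circ 0 = {0}" using assms(6) unfolding strongly_nilpotent_index_def by simp
    then show False using in_bpow_0[of circ 0 0] unfolding bpow_def by auto
  qed
  have Lvan: "\<And>x j. j \<ge> k - 1 \<Longrightarrow> (L x ^^ j) x = 0"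
  proof -
    fix x j assume j: "j \<ge> k - 1"
    have "in_bpow circ k ((L x ^^ (k-1)) x)" using Lpow_in[of circ "k-1" x] k1 unfolding L_def by simp
    then have z: "(L x ^^ (k-1)) x = 0" using assms(6) unfolding strongly_nilpotent_index_def bpow_def by auto
    have L0: "\<And>m. (L x ^^ m) 0 = 0"
    proof -
      fix m show "(L x ^^ m) 0 = 0"
        by (induction m) (simp_all, metis Ladd add_cancel_right_right)
    qed
    have "(L x ^^ j) x = (L x ^^ (j - (k-1))) ((L x ^^ (k-1)) x)"
      using j by (simp add: funpow_add[symmetric] comp_def) (metis funpow_add le_add_diff_inverse2 o_apply)
    then show "(L x ^^ j) x = 0" using z L0 by simp
  qed
  have Lnsmul: "\<And>x m y. L x (nsmul m y) = nsmul m (L x y)"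
    by (rule nsmul_additive) (rule Ladd)
  have Lsum: "\<And>x g (A::nat set). finite A \<Longrightarrow> L x (sum g A) = (\<Sum>i\<in>A. L x (g i))"
  proof -
    fix x g and A :: "nat set" assume "finite A"
    then show "L x (sum g A) = (\<Sum>i\<in>A. L x (g i))"
      by (induction A rule: finite_induct) (simp_all add: Ladd, metis Ladd add_cancel_right_right)
  qed
  have powf: "\<And>x m. x [^]\<^bsub>G\<^esub> m = (\<Sum>j<m. nsmul (m choose (j+1)) ((L x ^^ j) x))"
  proof -
    fix x and m :: nat
    show "x [^]\<^bsub>G\<^esub> m = (\<Sum>j<m. nsmul (m choose (j+1)) ((L x ^^ j) x))"
    proof (induction m)
      case 0 then show ?case unfolding G_def by simp
    next
      case (Suc m)
      define S where "S = (\<Sum>j<m. nsmul (m choose (j+1)) ((L x ^^ j) x))"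
      have "x [^]\<^bsub>G\<^esub> Suc m = circ x S" using G.nat_pow_Suc2[of x m] Suc unfolding G_def S_def by simp
      also have "\<dots> = x + S + L x S" by (rule circL)
      also have "L x S = (\<Sum>j<m. nsmul (m choose (j+1)) ((L x ^^ Suc j) x))"
        unfolding S_def by (simp add: Lsum Lnsmul)
      finally have e: "x [^]\<^bsub>G\<^esub> Suc m = x + S + (\<Sum>j<m. nsmul (m choose (j+1)) ((L x ^^ Suc j) x))" .
      have "(\<Sum>j<Suc m. nsmul (Suc m choose (j+1)) ((L x ^^ j) x))
          = (\<Sum>j<Suc m. nsmul (m choose j) ((L x ^^ j) x)) + (\<Sum>j<Suc m. nsmul (m choose (j+1)) ((L x ^^ j) x))"
        by (simp add: nsmul_plus sum.distrib)
      also have "(\<Sum>j<Suc m. nsmul (m choose (j+1)) ((L x ^^ j) x)) = S"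
        unfolding S_def by (simp add: binomial_eq_0)
      also have "(\<Sum>j<Suc m. nsmul (m choose j) ((L x ^^ j) x)) = x + (\<Sum>j<m. nsmul (m choose (j+1)) ((L x ^^ Suc j) x))"
        by (subst sum.lessThan_Suc_shift) (simp add: nsmul_Suc)
      finally show ?case using e by (simp add: algebra_simps)
    qed
  qed
  have powP: "\<And>x. inP p (x [^]\<^bsub>G\<^esub> p)"
  proof -
    fix x
    show "inP p (x [^]\<^bsub>G\<^esub> p)" unfolding powf
    proof (rule inP_sum)
      fix j assume j: "j \<in> {..<p}"
      show "inP p (nsmul (p choose (j+1)) ((L x ^^ j) x))"
      proof (cases "j \<ge> k - 1")
        case True then show ?thesis using Lvan[of "j" x] unfolding inP_def by (metis nsmul_zero)
      next
        case False
        then have "0 < j + 1" "j + 1 < p" using assms(7) by auto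
        then have "p dvd (p choose (j+1))" using assms(1) by (intro dvd_choose_prime) auto
        then obtain q where "p choose (j+1) = p * q" by blast
        then show ?thesis unfolding inP_def by (metis nsmul_mult)
      qed
    qed
  qed
  define PA where "PA = {z::'a. inP p z}"
  have lamnsmul: "\<And>x m y. lam x (nsmul m y) = nsmul m (lam x y)"
    by (rule nsmul_additive) (rule lamadd)
  have lamneg: "\<And>z a. lam z (- a) = - lam z a"
  proof -
    fix z a
    have "lam z (a + - a) = lam z a + lam z (- a)" by (rule lamadd)
    moreover have "lam z 0 = 0" using lamadd[of z 0 0] by simp
    ultimately show "lam z (- a) = - lam z a" by (simp add: eq_neg_iff_add_eq_0 add.commute)
  qed
  have subPA: "subgroup PA G"
  proof (rule G.subgroupI)
    show "PA \<subseteq> carrier G" unfolding G_def by simp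
    have "nsmul p 0 \<in> PA" unfolding PA_def inP_def by blast
    then show "PA \<noteq> {}" by blast
  next
    fix a assume "a \<in> PA"
    then obtain w where w: "a = nsmul p w" unfolding PA_def inP_def by blast
    have "lam (inv\<^bsub>G\<^esub> a) (lam a (inv\<^bsub>G\<^esub> a)) = lam (circ (inv\<^bsub>G\<^esub> a) a) (inv\<^bsub>G\<^esub> a)"
      by (rule lamcomp)
    also have "\<dots> = inv\<^bsub>G\<^esub> a" unfolding linv lam_def lone by simp
    finally have "inv\<^bsub>G\<^esub> a = lam (inv\<^bsub>G\<^esub> a) (lam a (inv\<^bsub>G\<^esub> a))" by simp
    also have "lam a (inv\<^bsub>G\<^esub> a) = - a" unfolding lam_def using rinv by simp
    finally have "inv\<^bsub>G\<^esub> a = lam (inv\<^bsub>G\<^esub> a) (- a)" .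
    also have "\<dots> = - lam (inv\<^bsub>G\<^esub> a) a" using lamneg by simp
    also have "\<dots> = nsmul p (- lam (inv\<^bsub>G\<^esub> a) w)" unfolding nsmul_neg
      by (subst (2) w, subst lamnsmul, rule refl)
    finally have "inv\<^bsub>G\<^esub> a = nsmul p (- lam (inv\<^bsub>G\<^esub> a) w)" .
    then show "inv\<^bsub>G\<^esub> a \<in> PA" unfolding PA_def inP_def by blast
  next
    fix a b assume "a \<in> PA" "b \<in> PA"
    then obtain u v where uv: "a = nsmul p u" "b = nsmul p v" unfolding PA_def inP_def by blast
    have "a \<otimes>\<^bsub>G\<^esub> b = a + b + L a b" using circL unfolding G_def by simp
    also have "\<dots> = nsmul p (u + v + L a v)" using uv Lnsmul by (simp add: nsmul_add)
    finally show "a \<otimes>\<^bsub>G\<^esub> b \<in> PA" unfolding PA_def inP_def by blast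
  qed
  have derPA: "derived G (carrier G) \<subseteq> PA"
  proof -
    have "{x [^]\<^bsub>G\<^esub> p | x. x \<in> carrier G} \<subseteq> PA" using powP unfolding PA_def by auto
    then have "generate G {x [^]\<^bsub>G\<^esub> p | x. x \<in> carrier G} \<subseteq> PA"
      using G.generate_subgroup_incl subPA by blast
    then show ?thesis using assms(8) unfolding powerful_group_def G_def by blast
  qed
  have comm: "\<And>x y. inP p (L x y - L y x)"
  proof -
    fix x y
    define c where "c = circ (circ (circ (inv\<^bsub>G\<^esub> x) (inv\<^bsub>G\<^esub> y)) x) y"
    have "c \<in> derived_set G (carrier G)"
    proof -
      have "inv\<^bsub>G\<^esub> (inv\<^bsub>G\<^esub> x) = x" "inv\<^bsub>G\<^esub> (inv\<^bsub>G\<^esub> y) = y"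
        using G.inv_inv unfolding G_def by simp_all
      then have "c = (inv\<^bsub>G\<^esub> x) \<otimes>\<^bsub>G\<^esub> (inv\<^bsub>G\<^esub> y) \<otimes>\<^bsub>G\<^esub> inv\<^bsub>G\<^esub> (inv\<^bsub>G\<^esub> x) \<otimes>\<^bsub>G\<^esub> inv\<^bsub>G\<^esub> (inv\<^bsub>G\<^esub> y)"
        unfolding c_def G_def by simp
      then show ?thesis
        by (intro UN_I[where a="inv\<^bsub>G\<^esub> x"] UN_I[where a="inv\<^bsub>G\<^esub> y"]) (simp_all add: G_def)
    qed
    then have "c \<in> derived G (carrier G)" unfolding derived_def by (rule generate.incl)
    then have "c \<in> PA" using derPA by (rule subsetD[rotated])
    then have cP: "inP p c" unfolding PA_def by simp
    have "circ (circ y x) c = circ x y"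
      unfolding c_def by (simp add: assoc, simp add: assoc[symmetric] rinv lone)
    then have "circ x y - circ y x = lam (circ y x) c" unfolding lam_def by simp
    moreover have "inP p (lam (circ y x) c)"
    proof -
      obtain w where "c = nsmul p w" using cP unfolding inP_def by blast
      then have "lam (circ y x) c = nsmul p (lam (circ y x) w)" using lamnsmul by simp
      then show ?thesis unfolding inP_def by blast
    qed
    moreover have "L x y - L y x = circ x y - circ y x" unfolding L_def bstar_def by simp
    ultimately show "inP p (L x y - L y x)" by simp
  qed
  show ?thesis
  proof (intro allI)
    fix a b
    define \<xi> where "\<xi> = \<gamma> ^ (p ^ (p - 1))"
    have key: "\<And>m. inP p (L (nsmul m a) b - L (nsmul m b) a)"
    proof -
      fix m
      have "L (nsmul m a) b - L (nsmul m b) a =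
            (L (nsmul m a) b - L b (nsmul m a)) + nsmul m (L b a - L a b) + (L a (nsmul m b) - L (nsmul m b) a)"
        by (simp add: Lnsmul nsmul_diff)
      moreover have "inP p (L (nsmul m a) b - L b (nsmul m a))" by (rule comm)
      moreover have "inP p (nsmul m (L b a - L a b))" by (rule inP_nsmul, rule comm)
      moreover have "inP p (L a (nsmul m b) - L (nsmul m b) a)" by (rule comm)
      ultimately show "inP p (L (nsmul m a) b - L (nsmul m b) a)"
        by (simp only: inP_add)
    qed
    have "dot circ p \<xi> a b - dot circ p \<xi> b a
        = (\<Sum>i = 0..p - 2. nsmul (\<xi> ^ (p - 1 - i)) (L (nsmul (\<xi> ^ i) a) b - L (nsmul (\<xi> ^ i) b) a))"
      unfolding dot_def L_def by (simp add: nsmul_diff sum_subtractf)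
    moreover have "inP p \<dots>" by (rule inP_sum) (rule inP_nsmul, rule key)
    ultimately show "dot circ p \<xi> a b - dot circ p \<xi> b a \<in> {nsmul p x | x. True}"
      unfolding inP_def by auto
  qed
qed

end
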